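(* Let $m\ge 2$ inputs have positive sizes $w_1,\dots,w_m$ with $s=\sum_{i=1}^m w_i$, and let $q>0$ be the reducer capacity. Then every A2A mapping schema for these inputs with capacity $q$ has communication cost at least $\frac{s^2}{q}$ and uses at least $\frac{s^2}{q^2}$ reducers.
   Context: An A2A mapping schema for inputs $i_1,\dots,i_m$ with sizes $w_1,\dots,w_m$ and capacity $q$ is an assignment of the inputs to a collection of reducers (each input may be assigned to several reducers) such that (1) every reducer is assigned inputs whose total size is at most $q$, and (2) every pair of distinct inputs is assigned together to at least one reducer. The communication cost of a mapping schema is the sum, over all reducers, of the total size of the inputs assigned to that reducer (equivalently $\sum_i w_i\cdot r_i$, where $r_i$ is the number of reducers input $i$ is assigned to). *)

theory Defs
  imports Main "HOL.Real"
begin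

text \<open>A mapping schema is given as a
list of reducers, each reducer being the set of inputs assigned to it
(a list, so that several reducers may receive the same inputs).\<close>

definition reducer_load :: "(nat \<Rightarrow> real) \<Rightarrow> nat set \<Rightarrow> real" where
  "reducer_load w R = (\<Sum>i\<in>R. w i)"

definition is_A2A_mapping_schema ::
  "nat \<Rightarrow> (nat \<Rightarrow> real) \<Rightarrow> real \<Rightarrow> nat set list \<Rightarrow> bool" where
  "is_A2A_mapping_schema m w q rs \<longleftrightarrow>
     (\<forall>R\<in>set rs. R \<subseteq> {1..m} \<and> reducer_load w R \<le> q) \<and>
     (\<forall>i\<in>{1..m}. \<forall>j\<in>{1..m}. i \<noteq> j \<longrightarrow> (\<exists>R\<in>set rs. i \<in> R \<and> j \<in> R))"

definition communication_cost :: "(nat \<Rightarrow> real) \<Rightarrow> nat set list \<Rightarrow> real" where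
  "communication_cost w rs = (\<Sum>R\<leftarrow>rs. reducer_load w R)"

end

theory Submission
  imports Defs
begin

theorem theorem3:
  fixes m :: nat and w :: "nat \<Rightarrow> real" and q :: real and rs :: "nat set list"
  assumes "m \<ge> 2"
    and "\<And>i. i \<in> {1..m} \<Longrightarrow> w i > 0"
    and "q > 0"
    and "is_A2A_mapping_schema m w q rs"
  shows "communication_cost w rs \<ge> (\<Sum>i=1..m. w i)^2 / q
       \<and> real (length rs) \<ge> (\<Sum>i=1..m. w i)^2 / q^2"
proof -
  define S where "S = {1..m}"
  define K where "K = {..<length rs}"
  define L where "L k = reducer_load w (rs!k)" for k
  define s where "s = (\<Sum>i\<in>S. w i)"
  have fS: "finite S" "finite K" by (auto simp: S_def K_def)
  have sub: "\<And>k. k \<in> K \<Longrightarrow> rs!k \<subseteq> S" and Lq: "\<And>k. k \<in> K \<Longrightarrow> L k \<le> q"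
    using assms(4) by (auto simp: is_A2A_mapping_schema_def S_def K_def L_def)
  have cov: "\<And>i j. i \<in> S \<Longrightarrow> j \<in> S \<Longrightarrow> i \<noteq> j \<Longrightarrow> \<exists>k\<in>K. i \<in> rs!k \<and> j \<in> rs!k"
    using assms(4) unfolding is_A2A_mapping_schema_def S_def K_def
    by (metis in_set_conv_nth lessThan_iff)
  have wpos: "\<And>i. i \<in> S \<Longrightarrow> w i > 0" using assms(2) S_def by auto
  have Lrep: "L k = (\<Sum>j\<in>S. if j \<in> rs!k then w j else 0)" if "k \<in> K" for k
  proof -
    have "S \<inter> rs!k = rs!k" using sub[OF that] by auto
    thus ?thesis using sum.inter_restrict[OF fS(1), of w "rs!k"]
      by (simp add: L_def reducer_load_def)
  qed
  have L0: "L k \<ge> 0" if "k \<in> K" for k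
    unfolding Lrep[OF that] using wpos by (intro sum_nonneg) (auto intro: less_imp_le)
  have cover1: "s \<le> (\<Sum>k\<in>{k\<in>K. i \<in> rs!k}. L k)" if iS: "i \<in> S" for i
  proof -
    have "s \<le> (\<Sum>j\<in>S. \<Sum>k\<in>{k\<in>K. i \<in> rs!k}. if j \<in> rs!k then w j else 0)"
      unfolding s_def
    proof (rule sum_mono)
      fix j assume jS: "j \<in> S"
      have "\<exists>k\<in>K. i \<in> rs!k \<and> j \<in> rs!k"
      proof (cases "i = j")
        case False thus ?thesis using cov iS jS by blast
      next
        case True
        have "\<exists>j'\<in>S. j' \<noteq> i" using assms(1) iS unfolding S_def
          by (metis atLeastAtMost_iff le_Suc_eq nat_1_add_1 not_less_eq_eq one_le_numeral plus_1_eq_Suc)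
        then obtain j' where "j' \<in> S" "j' \<noteq> i" by blast
        thus ?thesis using cov[OF iS] True by blast
      qed
      then obtain k where k: "k \<in> K" "i \<in> rs!k" "j \<in> rs!k" by blast
      have fin: "finite {k\<in>K. i \<in> rs!k}" using fS by auto
      have "w j = (if j \<in> rs!k then w j else 0)" using k by simp
      also have "\<dots> \<le> (\<Sum>k\<in>{k\<in>K. i \<in> rs!k}. if j \<in> rs!k then w j else 0)"
        by (rule member_le_sum) (use k wpos jS fin in \<open>auto intro: less_imp_le\<close>)
      finally show "w j \<le> \<dots>" .
    qed
    also have "\<dots> = (\<Sum>k\<in>{k\<in>K. i \<in> rs!k}. \<Sum>j\<in>S. if j \<in> rs!k then w j else 0)"
      by (rule sum.swap)
    also have "\<dots> = (\<Sum>k\<in>{k\<in>K. i \<in> rs!k}. L k)"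
      by (rule sum.cong) (auto simp: Lrep)
    finally show ?thesis .
  qed
  have cost: "communication_cost w rs = (\<Sum>k\<in>K. L k)"
    by (simp add: communication_cost_def sum_list_sum_nth K_def L_def atLeast0LessThan)
  have "s * s = (\<Sum>i\<in>S. w i * s)" by (simp add: s_def sum_distrib_right)
  also have "\<dots> \<le> (\<Sum>i\<in>S. w i * (\<Sum>k\<in>{k\<in>K. i \<in> rs!k}. L k))"
    by (rule sum_mono) (use cover1 wpos in \<open>auto intro!: mult_left_mono less_imp_le\<close>)
  also have "\<dots> = (\<Sum>i\<in>S. \<Sum>k\<in>K. if i \<in> rs!k then w i * L k else 0)"
    by (rule sum.cong) (auto simp: sum_distrib_left sum.inter_filter[OF fS(2), symmetric])
  also have "\<dots> = (\<Sum>k\<in>K. \<Sum>i\<in>S. if i \<in> rs!k then w i * L k else 0)"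
    by (rule sum.swap)
  also have "\<dots> = (\<Sum>k\<in>K. L k * L k)"
  proof (rule sum.cong)
    fix k assume k: "k \<in> K"
    have "(\<Sum>i\<in>S. if i \<in> rs!k then w i * L k else 0) = (\<Sum>i\<in>S. (if i \<in> rs!k then w i else 0) * L k)"
      by (rule sum.cong) auto
    also have "\<dots> = L k * L k" by (simp add: sum_distrib_right[symmetric] Lrep[OF k])
    finally show "(\<Sum>i\<in>S. if i \<in> rs!k then w i * L k else 0) = L k * L k" .
  qed simp
  also have "\<dots> \<le> (\<Sum>k\<in>K. q * L k)"
    by (rule sum_mono) (use Lq L0 in \<open>auto intro: mult_right_mono\<close>)
  finally have A: "s * s \<le> q * communication_cost w rs"
    by (simp add: cost sum_distrib_left)
  have B: "communication_cost w rs \<le> real (length rs) * q"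
    using sum_mono[of K L "\<lambda>_. q"] Lq by (simp add: cost K_def)
  have s2: "(\<Sum>i=1..m. w i)^2 = s * s" by (simp add: s_def S_def power2_eq_square)
  have C1: "s * s / q \<le> communication_cost w rs"
    using A assms(3) by (simp add: divide_le_eq mult.commute)
  have "s * s \<le> q * (real (length rs) * q)"
    using A B assms(3) by (meson mult_left_mono less_imp_le order_trans)
  hence C2: "s * s / q^2 \<le> real (length rs)"
    using assms(3) by (simp add: divide_le_eq power2_eq_square mult.commute mult.left_commute)
  show ?thesis using C1 C2 s2 by simp
qed

end
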